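(* Let $n \in \mathbb{Z}_{\geq 0}$, $k \in \mathbb{Z}_{\geq 1}$, $m_1,\dots,m_k\in\mathbb{Z}_{\geq 2}$, and let \[ G = \langle e_1, \ldots, e_k, h_1, \ldots, h_{2n} \mid e_1^{m_1} = \cdots = e_k^{m_k} = 1 \rangle . \] Let $G_1$ be the subgroup of $G$ generated by $\{e_1,\dots,e_k\}$ and let $S_1\subset G$ be the set defined below. Then for every $w \in G_1$ there exist an element $\gamma$ of the subgroup $\langle S_1\rangle$ generated by $S_1$ and integers $i_1,\dots,i_k$ such that $\gamma w = e_k^{i_k}\cdots e_1^{i_1}$.
   Context: Notation: $[l]=\{1,\dots,l\}$ for $l\in\mathbb{Z}_{>0}$; $[g,h]=ghg^{-1}h^{-1}$ and ${}^{g}h = ghg^{-1}$. For $2\le t\le k$ set $\Lambda_t = \big(([m_1]\times\cdots\times[m_{t-1}])\setminus\{(m_1,\dots,m_{t-1})\}\big)\times[m_t-1]$ and $\Xi_t=[m_{t+1}]\times\cdots\times[m_k]$, where $\Xi_k=\{0\}$. For $\lambda=(u_1,\dots,u_t)\in\Lambda_t$ and $\xi=(u_{t+1},\dots,u_k)\in\Xi_t$ put $f_\lambda=[e_t^{u_t}, e_{t-1}^{u_{t-1}}\cdots e_1^{u_1}]$ and $g_\xi = e_k^{u_k}\cdots e_{t+1}^{u_{t+1}}$ (with $g_\xi=1$ for $\xi\in\Xi_k$). Then $S_1=\{{}^{g_\xi}f_\lambda \mid 2\le t\le k,\ \lambda\in\Lambda_t,\ \xi\in\Xi_t\}$. *)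

theory Defs
  imports "HOL-Algebra.Algebra"
begin

text \<open>Descending ordered product  f b * f (b-1) * ... * f a  in the group G
  (equal to the identity when b < a).\<close>
definition dprod :: "('a, 'b) monoid_scheme \<Rightarrow> (nat \<Rightarrow> 'a) \<Rightarrow> nat \<Rightarrow> nat \<Rightarrow> 'a" where
  "dprod G f a b = foldr (\<lambda>i acc. f i \<otimes>\<^bsub>G\<^esub> acc) (rev [a..<Suc b]) \<one>\<^bsub>G\<^esub>"

definition gcomm :: "('a, 'b) monoid_scheme \<Rightarrow> 'a \<Rightarrow> 'a \<Rightarrow> 'a" where
  "gcomm G g h = g \<otimes>\<^bsub>G\<^esub> h \<otimes>\<^bsub>G\<^esub> inv\<^bsub>G\<^esub> g \<otimes>\<^bsub>G\<^esub> inv\<^bsub>G\<^esub> h"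

definition gconj :: "('a, 'b) monoid_scheme \<Rightarrow> 'a \<Rightarrow> 'a \<Rightarrow> 'a" where
  "gconj G g h = g \<otimes>\<^bsub>G\<^esub> h \<otimes>\<^bsub>G\<^esub> inv\<^bsub>G\<^esub> g"

text \<open>A pair (lambda, xi) in Lambda_t x Xi_t is encoded as one function
  u on indices 1..k: lambda = (u 1, ..., u t), xi = (u (t+1), ..., u k).
  f_lambda = [e_t^(u t), e_(t-1)^(u (t-1)) ... e_1^(u 1)],
  g_xi = e_k^(u k) ... e_(t+1)^(u (t+1))  (empty product = 1 when t = k).\<close>
definition S1 :: "('a, 'b) monoid_scheme \<Rightarrow> (nat \<Rightarrow> 'a) \<Rightarrow> (nat \<Rightarrow> nat) \<Rightarrow> nat \<Rightarrow> 'a set" where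
  "S1 G e m k =
     { gconj G (dprod G (\<lambda>j. e j [^]\<^bsub>G\<^esub> u j) (Suc t) k)
               (gcomm G (e t [^]\<^bsub>G\<^esub> u t) (dprod G (\<lambda>j. e j [^]\<^bsub>G\<^esub> u j) 1 (t - 1)))
     | t u. 2 \<le> t \<and> t \<le> k
          \<and> (\<forall>i\<in>{1..<t}. 1 \<le> u i \<and> u i \<le> m i)
          \<and> (\<exists>i\<in>{1..<t}. u i \<noteq> m i)
          \<and> 1 \<le> u t \<and> u t \<le> m t - 1
          \<and> (\<forall>i\<in>{Suc t..k}. 1 \<le> u i \<and> u i \<le> m i) }"

end

theory Submission
  imports Defs
begin

context group
begin

lemma foldr_closed:
  "(\<forall>l\<in>set xs. f l \<in> carrier G) \<Longrightarrow> foldr (\<lambda>i acc. f i \<otimes> acc) xs \<one> \<in> carrier G"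
  by (induction xs) auto

lemma foldr_mult:
  "(\<forall>l\<in>set xs. f l \<in> carrier G) \<Longrightarrow> z \<in> carrier G \<Longrightarrow>
   foldr (\<lambda>i acc. f i \<otimes> acc) xs z = foldr (\<lambda>i acc. f i \<otimes> acc) xs \<one> \<otimes> z"
  by (induction xs) (auto simp: m_assoc foldr_closed)

lemma dprod_closed:
  "(\<forall>l\<in>{a..b}. f l \<in> carrier G) \<Longrightarrow> dprod G f a b \<in> carrier G"
  unfolding dprod_def by (rule foldr_closed) auto

lemma dprod_split:
  assumes "a \<le> Suc c" "c \<le> b" "\<forall>l\<in>{a..b}. f l \<in> carrier G"
  shows "dprod G f a b = dprod G f (Suc c) b \<otimes> dprod G f a c"
proof -
  have "[a..<Suc b] = [a..<Suc c] @ [Suc c..<Suc b]"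
    using upt_add_eq_append[of a "Suc c" "b - c"] assms by simp
  then have "rev [a..<Suc b] = rev [Suc c..<Suc b] @ rev [a..<Suc c]" by simp
  then show ?thesis unfolding dprod_def
    apply (simp only: foldr_append)
    apply (rule foldr_mult)
    using assms by (auto intro!: foldr_closed)
qed

lemma dprod_single: "f j \<in> carrier G \<Longrightarrow> dprod G f j j = f j"
  unfolding dprod_def by simp

lemma dprod_empty: "b < a \<Longrightarrow> dprod G f a b = \<one>"
  unfolding dprod_def by simp

lemma dprod_cong: "(\<forall>l\<in>{a..b}. f l = g l) \<Longrightarrow> dprod G f a b = dprod G g a b"
  unfolding dprod_def by (rule foldr_cong) auto

lemma dprod_one: "dprod G (\<lambda>l. \<one>) a b = \<one>"
proof -
  have "foldr (\<lambda>i acc. \<one> \<otimes> acc) xs \<one> = \<one>" for xs :: "nat list"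
    by (induction xs) auto
  then show ?thesis unfolding dprod_def by simp
qed

lemma pow_mod:
  assumes x: "x \<in> carrier G" and "x [^] (m::nat) = \<one>"
  shows "x [^] (i::int) = x [^] (i mod int m)"
proof -
  have "x [^] (int m * (i div int m)) = \<one>"
    using assms by (simp add: int_pow_pow[symmetric] int_pow_int)
  moreover have "i = int m * (i div int m) + i mod int m" by simp
  ultimately show ?thesis using x
    by (metis int_pow_closed int_pow_mult l_one)
qed

definition redm :: "nat \<Rightarrow> int \<Rightarrow> nat" where
  "redm m i = (if i mod int m = 0 then m else nat (i mod int m))"

lemma pow_red:
  assumes x: "x \<in> carrier G" and "x [^] (m::nat) = \<one>" and "m \<ge> 2"
  shows "x [^] (i::int) = x [^] redm m i"
proof -
  have "x [^] i = x [^] (i mod int m)" using pow_mod assms by blast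
  also have "\<dots> = x [^] redm m i"
  proof (cases "i mod int m = 0")
    case True then show ?thesis using assms by (simp add: redm_def)
  next
    case False
    have "i mod int m \<ge> 0" using assms by simp
    then have "i mod int m = int (nat (i mod int m))" by simp
    then show ?thesis using False by (metis int_pow_int redm_def)
  qed
  finally show ?thesis .
qed

lemma red_bounds: "m \<ge> 2 \<Longrightarrow> 1 \<le> redm m i \<and> redm m i \<le> m"
proof -
  assume "m \<ge> 2"
  then have "0 \<le> i mod int m" "i mod int m < int m" by simp_all
  then show ?thesis unfolding redm_def by auto
qed

lemma red_m: "m \<ge> 2 \<Longrightarrow> redm m i = m \<longleftrightarrow> i mod int m = 0"
proof -
  assume "m \<ge> 2"
  then have "0 \<le> i mod int m" "i mod int m < int m" by simp_all
  then show ?thesis unfolding redm_def by auto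
qed

lemma cancel1: "a \<in> carrier G \<Longrightarrow> z \<in> carrier G \<Longrightarrow> inv a \<otimes> (a \<otimes> z) = z"
  by (simp add: m_assoc[symmetric])

lemma cancel2: "a \<in> carrier G \<Longrightarrow> z \<in> carrier G \<Longrightarrow> a \<otimes> (inv a \<otimes> z) = z"
  by (simp add: m_assoc[symmetric])

lemma key_identity:
  assumes [simp]: "A \<in> carrier G" "x \<in> carrier G" "B \<in> carrier G" "y \<in> carrier G"
  shows "gconj G A (gcomm G x B) \<otimes> inv (gconj G A (gcomm G y B)) \<otimes> (A \<otimes> y \<otimes> B)
         = A \<otimes> x \<otimes> B \<otimes> (inv x \<otimes> y)"
  unfolding gconj_def gcomm_def
  by (simp add: m_assoc inv_mult_group cancel1 cancel2)


lemma gcomm_one_left: "B \<in> carrier G \<Longrightarrow> gcomm G \<one> B = \<one>"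
  unfolding gcomm_def by simp

lemma gcomm_one_right: "x \<in> carrier G \<Longrightarrow> gcomm G x \<one> = \<one>"
  unfolding gcomm_def by simp

lemma gconj_one: "A \<in> carrier G \<Longrightarrow> gconj G A \<one> = \<one>"
  unfolding gconj_def by simp

lemma gcomm_closed: "x \<in> carrier G \<Longrightarrow> B \<in> carrier G \<Longrightarrow> gcomm G x B \<in> carrier G"
  unfolding gcomm_def by simp

lemma gconj_closed: "x \<in> carrier G \<Longrightarrow> B \<in> carrier G \<Longrightarrow> gconj G x B \<in> carrier G"
  unfolding gconj_def by simp

lemma S1_carrier:
  assumes e: "e ` {1..k} \<subseteq> carrier G"
  shows "S1 G e m k \<subseteq> carrier G"
proof
  fix z assume "z \<in> S1 G e m k"
  then obtain t and u :: "nat \<Rightarrow> nat" where z: "z = gconj G (dprod G (\<lambda>j. e j [^] u j) (Suc t) k)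
               (gcomm G (e t [^] u t) (dprod G (\<lambda>j. e j [^] u j) 1 (t - 1)))"
    and t: "2 \<le> t" "t \<le> k"
    unfolding S1_def by blast
  have ec: "l \<in> {1..k} \<Longrightarrow> e l \<in> carrier G" for l using e by auto
  show "z \<in> carrier G" unfolding z
    using t by (intro gconj_closed gcomm_closed dprod_closed nat_pow_closed ec ballI) auto
qed

lemma gen_elem:
  fixes i :: "nat \<Rightarrow> int" and r :: int
  assumes e: "e ` {1..k} \<subseteq> carrier G" and m: "\<forall>i\<in>{1..k}. 2 \<le> m i"
    and eo: "\<forall>i\<in>{1..k}. e i [^] m i = \<one>"
    and j: "2 \<le> j" "j \<le> k"
  shows "gconj G (dprod G (\<lambda>l. e l [^] i l) (Suc j) k)
           (gcomm G (e j [^] r) (dprod G (\<lambda>l. e l [^] i l) 1 (j - 1))) \<in> generate G (S1 G e m k)"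
proof -
  define u where "u = (\<lambda>l. if l = j then redm (m j) r else redm (m l) (i l))"
  have ec: "l \<in> {1..k} \<Longrightarrow> e l \<in> carrier G" for l using e by auto
  have pr: "l \<in> {1..k} \<Longrightarrow> e l [^] (x::int) = e l [^] redm (m l) x" for l x
    using pow_red[OF ec] m eo by auto
  have A: "dprod G (\<lambda>l. e l [^] i l) (Suc j) k = dprod G (\<lambda>l. e l [^] u l) (Suc j) k"
    by (rule dprod_cong) (auto simp: u_def pr)
  have B: "dprod G (\<lambda>l. e l [^] i l) 1 (j - 1) = dprod G (\<lambda>l. e l [^] u l) 1 (j - 1)"
    using j by (intro dprod_cong) (auto simp: u_def pr)
  have R: "e j [^] r = e j [^] u j" using j by (auto simp: u_def pr)
  have Acar: "dprod G (\<lambda>l. e l [^] i l) (Suc j) k \<in> carrier G"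
    by (intro dprod_closed ballI int_pow_closed ec) auto
  have Bcar: "dprod G (\<lambda>l. e l [^] i l) 1 (j - 1) \<in> carrier G"
    using j by (intro dprod_closed ballI int_pow_closed ec) auto
  have mj: "2 \<le> m j" using m j by auto
  show ?thesis
  proof (cases "r mod int (m j) = 0")
    case True
    then have "u j = m j" using mj by (simp add: u_def redm_def)
    then have "e j [^] r = \<one>" using R eo j by auto
    then show ?thesis using Acar Bcar by (simp add: gcomm_one_left gconj_one generate.one)
  next
    case False
    note rF = False
    show ?thesis
    proof (cases "\<forall>l\<in>{1..<j}. i l mod int (m l) = 0")
      case True
      have "dprod G (\<lambda>l. e l [^] i l) 1 (j - 1) = dprod G (\<lambda>l. \<one>) 1 (j - 1)"
      proof (rule dprod_cong, rule ballI)
        fix l assume l: "l \<in> {1..j-1}"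
        then have l2: "l \<in> {1..k}" "l \<in> {1..<j}" using j by auto
        then have "redm (m l) (i l) = m l" using True m by (auto simp: redm_def)
        then show "e l [^] i l = \<one>" using pr[OF l2(1)] eo l2 by auto
      qed
      then show ?thesis using Acar ec j
        by (simp add: dprod_one gcomm_one_right gconj_one generate.one)
    next
      case False
      then obtain l0 where l0: "l0 \<in> {1..<j}" "i l0 mod int (m l0) \<noteq> 0" by auto
      have "gconj G (dprod G (\<lambda>l. e l [^] u l) (Suc j) k)
           (gcomm G (e j [^] u j) (dprod G (\<lambda>l. e l [^] u l) 1 (j - 1))) \<in> S1 G e m k"
        unfolding S1_def
      proof (rule CollectI, rule exI[of _ j], rule exI[of _ u], intro conjI)
        show "\<forall>i\<in>{1..<j}. 1 \<le> u i \<and> u i \<le> m i"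
          using red_bounds m j by (auto simp: u_def)
        show "\<exists>i\<in>{1..<j}. u i \<noteq> m i"
          using l0 red_m m j by (intro bexI[of _ l0]) (auto simp: u_def)
        show "1 \<le> u j" using red_bounds mj by (auto simp: u_def)
        show "u j \<le> m j - 1" using red_m[OF mj, of r] red_bounds[OF mj, of r] rF
          by (auto simp: u_def)
        show "\<forall>i\<in>{Suc j..k}. 1 \<le> u i \<and> u i \<le> m i"
          using red_bounds m j by (auto simp: u_def)
      qed (use j in auto)
      then show ?thesis using A B R by (simp add: generate.incl)
    qed
  qed
qed

lemma dprod_decomp:
  assumes "1 \<le> j" "j \<le> k" "\<forall>l\<in>{1..k}. f l \<in> carrier G"
  shows "dprod G f 1 k = dprod G f (Suc j) k \<otimes> (f j \<otimes> dprod G f 1 (j - 1))"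
proof -
  have "dprod G f 1 k = dprod G f (Suc j) k \<otimes> dprod G f 1 j"
    using assms by (intro dprod_split) auto
  moreover have "dprod G f 1 j = dprod G f (Suc (j - 1)) j \<otimes> dprod G f 1 (j - 1)"
    using assms by (intro dprod_split) auto
  moreover have "dprod G f (Suc (j - 1)) j = f j"
    using assms by (simp add: dprod_single)
  ultimately show ?thesis by simp
qed

lemma step:
  fixes i :: "nat \<Rightarrow> int" and d :: int
  assumes e: "e ` {1..k} \<subseteq> carrier G" and m: "\<forall>i\<in>{1..k}. 2 \<le> m i"
    and eo: "\<forall>i\<in>{1..k}. e i [^] m i = \<one>"
    and j: "1 \<le> j" "j \<le> k"
  shows "\<exists>\<gamma>\<in>generate G (S1 G e m k). dprod G (\<lambda>l. e l [^] i l) 1 k \<otimes> e j [^] d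
           = \<gamma> \<otimes> dprod G (\<lambda>l. e l [^] (i(j := i j + d)) l) 1 k"
proof -
  have ec: "l \<in> {1..k} \<Longrightarrow> e l \<in> carrier G" for l using e by auto
  define A where "A = dprod G (\<lambda>l. e l [^] i l) (Suc j) k"
  define B where "B = dprod G (\<lambda>l. e l [^] i l) 1 (j - 1)"
  define x where "x = e j [^] i j"
  define y where "y = e j [^] (i j + d)"
  have ejc: "e j \<in> carrier G" using ec j by auto
  have Acar: "A \<in> carrier G" unfolding A_def
    by (intro dprod_closed ballI int_pow_closed ec) auto
  have Bcar: "B \<in> carrier G" unfolding B_def
    using j by (intro dprod_closed ballI int_pow_closed ec) auto
  have xc: "x \<in> carrier G" and yc: "y \<in> carrier G" and dc: "e j [^] d \<in> carrier G"
    using ejc by (auto simp: x_def y_def)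
  have n: "dprod G (\<lambda>l. e l [^] i l) 1 k = A \<otimes> (x \<otimes> B)"
    unfolding A_def B_def x_def using j ec by (intro dprod_decomp) auto
  have n': "dprod G (\<lambda>l. e l [^] (i(j := i j + d)) l) 1 k
      = dprod G (\<lambda>l. e l [^] (i(j := i j + d)) l) (Suc j) k
        \<otimes> (y \<otimes> dprod G (\<lambda>l. e l [^] (i(j := i j + d)) l) 1 (j - 1))"
    unfolding y_def using j ec by (subst dprod_decomp[of j]) auto
  have A': "dprod G (\<lambda>l. e l [^] (i(j := i j + d)) l) (Suc j) k = A"
    unfolding A_def by (rule dprod_cong) auto
  have B': "dprod G (\<lambda>l. e l [^] (i(j := i j + d)) l) 1 (j - 1) = B"
    unfolding B_def using j by (intro dprod_cong) auto
  have yx: "y = x \<otimes> e j [^] d" unfolding x_def y_def using ejc by (simp add: int_pow_mult)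
  have subH: "subgroup (generate G (S1 G e m k)) G"
    using S1_carrier[OF e] by (rule generate_is_subgroup)
  show ?thesis
  proof (cases "j = 1")
    case True
    then have "B = \<one>" unfolding B_def by (simp add: dprod_empty)
    then show ?thesis using n n' A' B' True Acar xc dc yx
      by (intro bexI[of _ \<one>]) (auto simp: m_assoc generate.one)
  next
    case False
    then have j2: "2 \<le> j" using j by auto
    define \<gamma> where "\<gamma> = gconj G A (gcomm G x B) \<otimes> inv (gconj G A (gcomm G y B))"
    have g1: "gconj G A (gcomm G x B) \<in> generate G (S1 G e m k)"
      unfolding A_def B_def x_def using gen_elem[OF e m eo j2 j(2)] by blast
    have g2: "gconj G A (gcomm G y B) \<in> generate G (S1 G e m k)"
      unfolding A_def B_def y_def using gen_elem[OF e m eo j2 j(2)] by blast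
    have gH: "\<gamma> \<in> generate G (S1 G e m k)" unfolding \<gamma>_def
      using g1 g2 subH by (intro subgroup.m_closed subgroup.m_inv_closed) auto
    have "\<gamma> \<otimes> (A \<otimes> y \<otimes> B) = A \<otimes> x \<otimes> B \<otimes> (inv x \<otimes> y)"
      unfolding \<gamma>_def using Acar xc Bcar yc by (rule key_identity)
    also have "inv x \<otimes> y = e j [^] d" using yx xc dc by (simp add: cancel1)
    finally have eq: "\<gamma> \<otimes> (A \<otimes> y \<otimes> B) = A \<otimes> x \<otimes> B \<otimes> e j [^] d" .
    show ?thesis
      apply (rule bexI[OF _ gH])
      using eq n n' A' B' Acar xc Bcar yc by (simp add: m_assoc)
  qed
qed
end


theorem lemma3p8:
  fixes G :: "('a, 'b) monoid_scheme" (structure)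
    and n k :: nat and m :: "nat \<Rightarrow> nat" and e h :: "nat \<Rightarrow> 'a" and w :: 'a
  assumes "group G"
    and "1 \<le> k"
    and "\<forall>i\<in>{1..k}. 2 \<le> m i"
    and "e ` {1..k} \<subseteq> carrier G"
    and "h ` {1..2*n} \<subseteq> carrier G"
    and "\<forall>i\<in>{1..k}. e i [^] m i = \<one>"
    and "carrier G = generate G (e ` {1..k} \<union> h ` {1..2*n})"
    and "w \<in> generate G (e ` {1..k})"
  shows "\<exists>\<gamma>\<in>generate G (S1 G e m k). \<exists>i :: nat \<Rightarrow> int.
           \<gamma> \<otimes> w = dprod G (\<lambda>j. e j [^] i j) 1 k"
proof -
  interpret group G by fact
  note e = assms(4) and mm = assms(3) and eo = assms(6)
  let ?H = "generate G (S1 G e m k)"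
  have subH: "subgroup ?H G"
    using S1_carrier[OF e] by (rule generate_is_subgroup)
  have Hc: "?H \<subseteq> carrier G" using S1_carrier[OF e] by (rule generate_incl)
  have ec: "l \<in> {1..k} \<Longrightarrow> e l \<in> carrier G" for l using e by auto
  define P where "P x \<longleftrightarrow> (\<exists>\<gamma>\<in>?H. \<exists>i :: nat \<Rightarrow> int. \<gamma> \<otimes> x = dprod G (\<lambda>j. e j [^] i j) 1 k)" for x
  have stepP: "P (x \<otimes> e j [^] d)" if x: "x \<in> carrier G" "P x" and j: "j \<in> {1..k}" for x j and d :: int
  proof -
    from x(2) obtain \<gamma> and i :: "nat \<Rightarrow> int" where g: "\<gamma> \<in> ?H" "\<gamma> \<otimes> x = dprod G (\<lambda>j. e j [^] i j) 1 k"
      unfolding P_def by blast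
    from step[OF e mm eo, of j i d] j obtain \<gamma>' where g': "\<gamma>' \<in> ?H"
      "dprod G (\<lambda>l. e l [^] i l) 1 k \<otimes> e j [^] d
           = \<gamma>' \<otimes> dprod G (\<lambda>l. e l [^] (i(j := i j + d)) l) 1 k" by auto
    have gc: "\<gamma> \<in> carrier G" "\<gamma>' \<in> carrier G" using g g' Hc by auto
    have dc: "e j [^] d \<in> carrier G" using ec j by auto
    have nc: "dprod G (\<lambda>l. e l [^] (i(j := i j + d)) l) 1 k \<in> carrier G"
      by (intro dprod_closed ballI int_pow_closed ec) auto
    have "(inv \<gamma>' \<otimes> \<gamma>) \<otimes> (x \<otimes> e j [^] d) = inv \<gamma>' \<otimes> ((\<gamma> \<otimes> x) \<otimes> e j [^] d)"
      using gc x dc by (simp add: m_assoc)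
    also have "\<dots> = dprod G (\<lambda>l. e l [^] (i(j := i j + d)) l) 1 k"
      using g(2) g'(2) gc nc by (simp add: cancel1)
    finally show ?thesis unfolding P_def
      using g g' subH by (intro bexI[of _ "inv \<gamma>' \<otimes> \<gamma>"] exI) (auto intro: subgroup.m_closed subgroup.m_inv_closed)
  qed
  have main: "\<forall>x\<in>carrier G. P x \<longrightarrow> P (x \<otimes> v)" if "v \<in> generate G (e ` {1..k})" for v
    using that
  proof (induction v rule: generate.induct)
    case one
    then show ?case by simp
  next
    case (incl h)
    then obtain j where j: "j \<in> {1..k}" "h = e j" by auto
    then have "h = e j [^] (1::int)" using ec by simp
    then show ?case using stepP[of _ j "1::int"] j by auto
  next
    case (inv h)
    then obtain j where j: "j \<in> {1..k}" "h = e j" by auto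
    then have "inv h = e j [^] (- 1::int)" using ec by (simp add: int_pow_neg)
    then show ?case using stepP[of _ j "- 1::int"] j by auto
  next
    case (eng h1 h2)
    have c: "h1 \<in> carrier G" "h2 \<in> carrier G"
      using eng.hyps e generate_in_carrier by blast+
    show ?case
    proof (intro ballI impI)
      fix x assume x: "x \<in> carrier G" "P x"
      then have "P (x \<otimes> h1)" using eng.IH(1) by blast
      then have "P (x \<otimes> h1 \<otimes> h2)" using eng.IH(2) x c by blast
      then show "P (x \<otimes> (h1 \<otimes> h2))" using x c by (simp add: m_assoc)
    qed
  qed
  have P1: "P \<one>" unfolding P_def
    using subgroup.one_closed[OF subH]
    by (intro bexI[of _ \<one>] exI[of _ "\<lambda>_. 0"]) (auto simp: dprod_one)
  have "P (\<one> \<otimes> w)" using main[OF assms(8)] P1 by blast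
  then show ?thesis unfolding P_def using generate_in_carrier[OF e assms(8)] by simp
qed

end
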